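(* (i) The set $A$ of atoms is not FSM ascending infinite. (ii) If $X$ is an infinite finitely supported subset of an invariant set $U$, then $\wp_{fin}(X)$ is FSM ascending infinite.
   Context: Framework (FSM). Work in ZF with a fixed infinite set $A$ of atoms; $S_A$ is the group of bijections of $A$ fixing all but finitely many atoms, acting on $A$ by evaluation; $Fix(S)$ is the set of $\pi\in S_A$ fixing each element of $S\subseteq A$; $S$ supports $x$ if $\pi\cdot x=x$ for all $\pi\in Fix(S)$. An invariant set is an $S_A$-set all of whose elements have finite supports; subsets carry $\pi\star Z=\{\pi\cdot z:z\in Z\}$. $\wp_{fin}(X)$ is the set of finite subsets of $X$. $\mathbb N$ carries the trivial action, and a map $n\mapsto X_n$ is finitely supported if there is a finite $S$ with $\pi\star X_n=X_n$ for all $n$ and all $\pi\in Fix(S)$. "Infinite" means not in bijection with a natural number. A finitely supported subset $Y$ of an invariant set $V$ is FSM ascending infinite if there is a sequence $(Y_n)_{n\in\mathbb N}$ of finitely supported subsets of $V$ with $Y_0\subseteq Y_1\subseteq\cdots$, such that $n\mapsto Y_n$ is finitely supported, $Y\subseteq\bigcup_nY_n$, and there is no $n$ with $Y\subseteq Y_n$. *)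

theory Defs
  imports Main
begin

definition SA :: "('at \<Rightarrow> 'at) set" where
  "SA = {\<pi>. bij \<pi> \<and> finite {a. \<pi> a \<noteq> a}}"

definition Fix :: "'at set \<Rightarrow> ('at \<Rightarrow> 'at) set" where
  "Fix S = {\<pi> \<in> SA. \<forall>a\<in>S. \<pi> a = a}"

definition supports :: "(('at \<Rightarrow> 'at) \<Rightarrow> 'b \<Rightarrow> 'b) \<Rightarrow> 'at set \<Rightarrow> 'b \<Rightarrow> bool" where
  "supports act S x \<longleftrightarrow> (\<forall>\<pi>\<in>Fix S. act \<pi> x = x)"

definition invariant_set :: "(('at \<Rightarrow> 'at) \<Rightarrow> 'b \<Rightarrow> 'b) \<Rightarrow> 'b set \<Rightarrow> bool" where
  "invariant_set act U \<longleftrightarrow>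
     (\<forall>\<pi>\<in>SA. \<forall>x\<in>U. act \<pi> x \<in> U) \<and>
     (\<forall>x\<in>U. act id x = x) \<and>
     (\<forall>\<pi>\<in>SA. \<forall>\<sigma>\<in>SA. \<forall>x\<in>U. act (\<pi> \<circ> \<sigma>) x = act \<pi> (act \<sigma> x)) \<and>
     (\<forall>x\<in>U. \<exists>S. finite S \<and> supports act S x)"

definition set_act :: "(('at \<Rightarrow> 'at) \<Rightarrow> 'b \<Rightarrow> 'b) \<Rightarrow> ('at \<Rightarrow> 'at) \<Rightarrow> 'b set \<Rightarrow> 'b set" where
  "set_act act \<pi> Z = act \<pi> ` Z"

definition fs_subset :: "(('at \<Rightarrow> 'at) \<Rightarrow> 'b \<Rightarrow> 'b) \<Rightarrow> 'b set \<Rightarrow> 'b set \<Rightarrow> bool" where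
  "fs_subset act V Y \<longleftrightarrow> Y \<subseteq> V \<and> (\<exists>S. finite S \<and> supports (set_act act) S Y)"

definition pow_fin :: "'b set \<Rightarrow> 'b set set" where
  "pow_fin X = {Z. Z \<subseteq> X \<and> finite Z}"

definition fsm_asc_inf :: "(('at \<Rightarrow> 'at) \<Rightarrow> 'b \<Rightarrow> 'b) \<Rightarrow> 'b set \<Rightarrow> 'b set \<Rightarrow> bool" where
  "fsm_asc_inf act V Y \<longleftrightarrow> fs_subset act V Y \<and>
     (\<exists>Ys :: nat \<Rightarrow> 'b set.
        (\<forall>n. fs_subset act V (Ys n)) \<and>
        (\<forall>n. Ys n \<subseteq> Ys (Suc n)) \<and>
        (\<exists>S. finite S \<and> (\<forall>\<pi>\<in>Fix S. \<forall>n. set_act act \<pi> (Ys n) = Ys n)) \<and>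
        Y \<subseteq> (\<Union>n. Ys n) \<and>
        \<not> (\<exists>n. Y \<subseteq> Ys n))"

end

theory Submission
  imports Defs
begin

lemma img_fin_card:
  assumes "f ` X = X"
  shows "(\<lambda>Z. f ` Z) ` {Z. Z \<subseteq> X \<and> finite Z \<and> card Z \<le> n} = {Z. Z \<subseteq> X \<and> finite Z \<and> card Z \<le> n}"
proof
  show "(\<lambda>Z. f ` Z) ` {Z. Z \<subseteq> X \<and> finite Z \<and> card Z \<le> n} \<subseteq> {Z. Z \<subseteq> X \<and> finite Z \<and> card Z \<le> n}"
    using assms by (auto intro: card_image_le[THEN order_trans])
next
  show "{Z. Z \<subseteq> X \<and> finite Z \<and> card Z \<le> n} \<subseteq> (\<lambda>Z. f ` Z) ` {Z. Z \<subseteq> X \<and> finite Z \<and> card Z \<le> n}"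
  proof
    fix Z assume Z: "Z \<in> {Z. Z \<subseteq> X \<and> finite Z \<and> card Z \<le> n}"
    define C where "C = inv_into X f ` Z"
    have sub: "Z \<subseteq> f ` X" using Z assms by auto
    have "f ` C = Z" unfolding C_def using sub by (force simp: f_inv_into_f image_comp)
    moreover have "C \<subseteq> X" unfolding C_def using sub by (auto intro: inv_into_into)
    moreover have "finite C" unfolding C_def using Z by auto
    moreover have "card C \<le> n" unfolding C_def using Z card_image_le[of Z "inv_into X f"] by auto
    ultimately show "Z \<in> (\<lambda>Z. f ` Z) ` {Z. Z \<subseteq> X \<and> finite Z \<and> card Z \<le> n}" by blast
  qed
qed

lemma img_fin:
  assumes "f ` X = X"
  shows "(\<lambda>Z. f ` Z) ` pow_fin X = pow_fin X"
proof -
  have "pow_fin X = (\<Union>n. {Z. Z \<subseteq> X \<and> finite Z \<and> card Z \<le> n})"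
    unfolding pow_fin_def by auto
  then show ?thesis using img_fin_card[OF assms] by (simp add: image_UN)
qed

lemma partA:
  assumes inf: "infinite (UNIV :: 'at set)"
  shows "\<not> fsm_asc_inf (\<lambda>\<pi> a. \<pi> a) (UNIV :: 'at set) UNIV"
proof
  assume "fsm_asc_inf (\<lambda>\<pi> a. \<pi> a) (UNIV :: 'at set) UNIV"
  then have "\<exists>Ys :: nat \<Rightarrow> 'at set.
        (\<forall>n. fs_subset (\<lambda>\<pi> a. \<pi> a) UNIV (Ys n)) \<and>
        (\<forall>n. Ys n \<subseteq> Ys (Suc n)) \<and>
        (\<exists>S. finite S \<and> (\<forall>\<pi>\<in>Fix S. \<forall>n. set_act (\<lambda>\<pi> a. \<pi> a) \<pi> (Ys n) = Ys n)) \<and>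
        UNIV \<subseteq> (\<Union>n. Ys n) \<and>
        \<not> (\<exists>n. UNIV \<subseteq> Ys n)"
    unfolding fsm_asc_inf_def by (rule conjunct2)
  then obtain Ys :: "nat \<Rightarrow> 'at set" where H: "(\<forall>n. fs_subset (\<lambda>\<pi> a. \<pi> a) UNIV (Ys n)) \<and>
        (\<forall>n. Ys n \<subseteq> Ys (Suc n)) \<and>
        (\<exists>S. finite S \<and> (\<forall>\<pi>\<in>Fix S. \<forall>n. set_act (\<lambda>\<pi> a. \<pi> a) \<pi> (Ys n) = Ys n)) \<and>
        UNIV \<subseteq> (\<Union>n. Ys n) \<and>
        \<not> (\<exists>n. UNIV \<subseteq> Ys n)" by (rule exE)
  from H have mono: "\<forall>n. Ys n \<subseteq> Ys (Suc n)" by (elim conjE)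
  from H have ex: "\<exists>S. finite S \<and> (\<forall>\<pi>\<in>Fix S. \<forall>n. set_act (\<lambda>\<pi> a. \<pi> a) \<pi> (Ys n) = Ys n)" by (elim conjE)
  from H have cov: "UNIV \<subseteq> (\<Union>n. Ys n)" by (elim conjE)
  from H have nc: "\<not> (\<exists>n. UNIV \<subseteq> Ys n)" by (elim conjE)
  from ex obtain S where S: "finite S"
    and sup0: "\<forall>\<pi>\<in>Fix S. \<forall>n. set_act (\<lambda>\<pi> a. \<pi> a) \<pi> (Ys n) = Ys n" by blast
  have sup: "\<pi> ` Ys n = Ys n" if "\<pi> \<in> Fix S" for \<pi> n
    using sup0 that unfolding set_act_def by simp
  have mono': "m \<le> n \<Longrightarrow> Ys m \<subseteq> Ys n" for m n
    using lift_Suc_mono_le[of Ys] mono by blast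
  have swapFix: "(\<lambda>x. if x = a then b else if x = b then a else x) \<in> Fix S"
    if "a \<notin> S" "b \<notin> S" for a b
  proof -
    let ?p = "(\<lambda>x. if x = a then b else if x = b then a else x)"
    have inv: "?p (?p y) = y" for y by simp
    have pp: "?p \<circ> ?p = id" by (rule ext) (simp only: comp_apply inv id_apply)
    have "bij ?p" by (rule o_bij[OF pp pp])
    moreover have "finite {x. ?p x \<noteq> x}"
      by (rule finite_subset[of _ "{a,b}"]) auto
    ultimately show ?thesis using that unfolding Fix_def SA_def by auto
  qed
  have full: "b \<in> Ys n" if "a \<in> Ys n" "a \<notin> S" "b \<notin> S" for a b n
  proof -
    let ?p = "(\<lambda>x. if x = a then b else if x = b then a else x)"
    have "b = ?p a" by simp
    also have "?p a \<in> ?p ` Ys n" using that by blast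
    also have "?p ` Ys n = Ys n" by (rule sup[OF swapFix[OF that(2,3)]])
    finally show ?thesis .
  qed
  obtain a where a: "a \<notin> S" using inf S by (metis ex_new_if_finite)
  obtain n0 where n0: "a \<in> Ys n0" using cov by blast
  have "\<forall>s\<in>S. \<exists>n. s \<in> Ys n" using cov by blast
  then obtain g where g: "\<And>s. s \<in> S \<Longrightarrow> s \<in> Ys (g s)" by metis
  define N where "N = max n0 (Max (insert 0 (g ` S)))"
  have "UNIV \<subseteq> Ys N"
  proof
    fix x
    show "x \<in> Ys N"
    proof (cases "x \<in> S")
      case True
      have "g x \<le> Max (insert 0 (g ` S))" using S True by (simp add: Max_ge)
      then have "g x \<le> N" unfolding N_def by simp
      then show ?thesis using mono' g[OF True] by blast
    next
      case False
      have "x \<in> Ys n0" using full[OF n0 a False] .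
      moreover have "n0 \<le> N" unfolding N_def by simp
      ultimately show ?thesis using mono' by blast
    qed
  qed
  then show False using nc by blast
qed

lemma partB:
  assumes fs: "fs_subset act U X" and inf: "infinite X"
  shows "fsm_asc_inf (set_act act) (pow_fin U) (pow_fin X)"
proof -
  obtain S where S: "finite S" and XU: "X \<subseteq> U" and sX: "\<And>\<pi>. \<pi> \<in> Fix S \<Longrightarrow> act \<pi> ` X = X"
    using fs unfolding fs_subset_def supports_def set_act_def by blast
  define Ys where "Ys n = {Z. Z \<subseteq> X \<and> finite Z \<and> card Z \<le> n}" for n
  have PU: "pow_fin X \<subseteq> pow_fin U" using XU unfolding pow_fin_def by auto
  have YU: "Ys n \<subseteq> pow_fin U" for n using XU unfolding pow_fin_def Ys_def by auto
  have sY: "set_act (set_act act) \<pi> (Ys n) = Ys n" if "\<pi> \<in> Fix S" for \<pi> n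
    unfolding set_act_def Ys_def using img_fin_card[OF sX[OF that]] by simp
  have sP: "set_act (set_act act) \<pi> (pow_fin X) = pow_fin X" if "\<pi> \<in> Fix S" for \<pi>
    unfolding set_act_def using img_fin[OF sX[OF that]] by simp
  have A: "fs_subset (set_act act) (pow_fin U) (pow_fin X)"
    unfolding fs_subset_def supports_def using PU S sP by blast
  have B: "\<forall>n. fs_subset (set_act act) (pow_fin U) (Ys n)"
    unfolding fs_subset_def supports_def using YU S sY by blast
  have C: "\<forall>n. Ys n \<subseteq> Ys (Suc n)" unfolding Ys_def by auto
  have D: "pow_fin X \<subseteq> (\<Union>n. Ys n)" unfolding pow_fin_def Ys_def by auto
  have E: "\<not> (\<exists>n. pow_fin X \<subseteq> Ys n)"
  proof
    assume "\<exists>n. pow_fin X \<subseteq> Ys n"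
    then obtain n where n: "pow_fin X \<subseteq> Ys n" by blast
    obtain Z where Z: "Z \<subseteq> X" "finite Z" "card Z = Suc n"
      using infinite_arbitrarily_large[OF inf] by blast
    have "Z \<in> pow_fin X" using Z unfolding pow_fin_def by simp
    then have "Z \<in> Ys n" using n by blast
    then show False using Z unfolding Ys_def by simp
  qed
  have F: "\<exists>S. finite S \<and> (\<forall>\<pi>\<in>Fix S. \<forall>n. set_act (set_act act) \<pi> (Ys n) = Ys n)"
    using S sY by blast
  show ?thesis unfolding fsm_asc_inf_def
    using A B C D E F by blast
qed

theorem mainTheorem14:
  assumes "infinite (UNIV :: 'at set)"
  shows "\<not> fsm_asc_inf (\<lambda>\<pi> a. \<pi> a) (UNIV :: 'at set) UNIV
    \<and> (\<forall>(act :: ('at \<Rightarrow> 'at) \<Rightarrow> 'b \<Rightarrow> 'b) U X.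
          invariant_set act U \<and> fs_subset act U X \<and> infinite X \<longrightarrow>
          fsm_asc_inf (set_act act) (pow_fin U) (pow_fin X))"
proof (intro conjI allI impI)
  show "\<not> fsm_asc_inf (\<lambda>\<pi> a. \<pi> a) (UNIV :: 'at set) UNIV" by (rule partA[OF assms])
next
  fix act :: "('at \<Rightarrow> 'at) \<Rightarrow> 'b \<Rightarrow> 'b" and U X
  assume h: "invariant_set act U \<and> fs_subset act U X \<and> infinite X"
  then show "fsm_asc_inf (set_act act) (pow_fin U) (pow_fin X)"
    using partB[of act U X] by simp
qed

end
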